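(* Let $X$ be an infinite-dimensional Banach space over $\mathbb{R}$ with a Schauder basis $(a_n)_{n\in\mathbb{N}}$, and let $A=\{a_n:n\in\mathbb{N}\}$. Then $A$ is a topologically independent subset of the additive topological group of $X$, but $\langle A\rangle$ is not the Tychonoff direct sum $\bigoplus_{a\in A}\langle a\rangle$.
   Context: A subset $A$ of an abelian topological group $G$ (neutral element $0$) is topologically independent if $0\notin A$ and for every neighborhood $W$ of $0$ there is a neighborhood $U$ of $0$ such that for every finite $F\subseteq A$ and every family of integers $\{z_a: a\in F\}$, the condition $\sum_{a\in F}z_a a\in U$ implies $z_a a\in W$ for all $a\in F$. $\langle A\rangle$ is the additive subgroup generated by $A$ with the subspace topology. The Tychonoff direct sum $\bigoplus_{a\in A}\langle a\rangle$ is the direct sum of the groups $\langle a\rangle$ (subspace topology) with the topology induced from the product $\prod_{a\in A}\langle a\rangle$; "$\langle A\rangle$ is the Tychonoff direct sum" means the map $(g_a)\mapsto\sum_a g_a$ is an isomorphism of topological groups from $\bigoplus_{a\in A}\langle a\rangle$ onto $\langle A\rangle$. *)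

theory Defs
  imports "HOL-Analysis.Analysis"
begin

definition int_mult :: "int \<Rightarrow> 'a::ab_group_add \<Rightarrow> 'a" where
  "int_mult z a = (if 0 \<le> z then (\<Sum>_\<in>{..<nat z}. a) else - (\<Sum>_\<in>{..<nat (- z)}. a))"

definition nhd0 :: "'a::{topological_space, ab_group_add} set \<Rightarrow> bool" where
  "nhd0 W \<longleftrightarrow> (\<exists>V. open V \<and> 0 \<in> V \<and> V \<subseteq> W)"

definition top_independent :: "'a::{topological_space, ab_group_add} set \<Rightarrow> bool" where
  "top_independent A \<longleftrightarrow> 0 \<notin> A \<and>
     (\<forall>W. nhd0 W \<longrightarrow> (\<exists>U. nhd0 U \<and>
        (\<forall>F z. finite F \<and> F \<subseteq> A \<and> (\<Sum>a\<in>F. int_mult (z a) a) \<in> U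
               \<longrightarrow> (\<forall>a\<in>F. int_mult (z a) a \<in> W))))"

definition gen_subgroup :: "'a::ab_group_add set \<Rightarrow> 'a set" where
  "gen_subgroup A = {(\<Sum>a\<in>F. int_mult (z a) a) | F z. finite F \<and> F \<subseteq> A}"

definition dsum_carrier :: "'a::ab_group_add set \<Rightarrow> ('a \<Rightarrow> 'a) set" where
  "dsum_carrier A = {g \<in> (\<Pi>\<^sub>E a\<in>A. gen_subgroup {a}). finite {a\<in>A. g a \<noteq> 0}}"

definition dsum_topology :: "'a::{topological_space, ab_group_add} set \<Rightarrow> ('a \<Rightarrow> 'a) topology" where
  "dsum_topology A = subtopology (product_topology (\<lambda>a. subtopology euclidean (gen_subgroup {a})) A)
                                 (dsum_carrier A)"

definition dsum_map :: "'a::ab_group_add set \<Rightarrow> ('a \<Rightarrow> 'a) \<Rightarrow> 'a" where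
  "dsum_map A g = (\<Sum>a\<in>{a\<in>A. g a \<noteq> 0}. g a)"

text \<open><A> is the Tychonoff direct sum: the summation map is an isomorphism of topological groups
  from the Tychonoff direct sum onto <A> (with the subspace topology).\<close>
definition is_tychonoff_direct_sum :: "'a::{topological_space, ab_group_add} set \<Rightarrow> bool" where
  "is_tychonoff_direct_sum A \<longleftrightarrow>
     (\<forall>g\<in>dsum_carrier A. \<forall>h\<in>dsum_carrier A.
        dsum_map A (restrict (\<lambda>a. g a + h a) A) = dsum_map A g + dsum_map A h) \<and>
     homeomorphic_map (dsum_topology A) (subtopology euclidean (gen_subgroup A)) (dsum_map A)"

definition schauder_basis :: "(nat \<Rightarrow> 'a::real_normed_vector) \<Rightarrow> bool" where
  "schauder_basis b \<longleftrightarrow> (\<forall>x. \<exists>!c::nat \<Rightarrow> real. (\<lambda>n. \<Sum>i<n. c i *\<^sub>R b i) \<longlonglongrightarrow> x)"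

definition infinite_dimensional :: "'a::real_vector itself \<Rightarrow> bool" where
  "infinite_dimensional _ \<longleftrightarrow> \<not> (\<exists>S::'a set. finite S \<and> span S = UNIV)"

end

theory Submission
  imports Defs
begin


lemma int_mult_eq: "int_mult z a = of_int z *\<^sub>R (a::'a::real_vector)"
  unfolding int_mult_def by (auto simp: sum_constant_scaleR)

definition sb_coef :: "(nat \<Rightarrow> 'a::real_normed_vector) \<Rightarrow> 'a \<Rightarrow> nat \<Rightarrow> real" where
  "sb_coef b x = (THE c. (\<lambda>n. \<Sum>i<n. c i *\<^sub>R b i) \<longlonglongrightarrow> x)"

lemma coef_conv: assumes "schauder_basis b" shows "(\<lambda>n. \<Sum>i<n. sb_coef b x i *\<^sub>R b i) \<longlonglongrightarrow> x"
proof -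
  have "\<exists>!c. (\<lambda>n. \<Sum>i<n. c i *\<^sub>R b i) \<longlonglongrightarrow> x"
    using assms unfolding schauder_basis_def by (rule spec)
  then show ?thesis unfolding sb_coef_def by (rule theI')
qed

lemma coef_unique: assumes "schauder_basis b" "(\<lambda>n. \<Sum>i<n. c i *\<^sub>R b i) \<longlonglongrightarrow> x" shows "sb_coef b x = c"
proof -
  have "\<exists>!c. (\<lambda>n. \<Sum>i<n. c i *\<^sub>R b i) \<longlonglongrightarrow> x"
    using assms(1) unfolding schauder_basis_def by (rule spec)
  then show ?thesis unfolding sb_coef_def by (rule the1_equality) (rule assms(2))
qed

lemma coef_add: assumes "schauder_basis b"
  shows "sb_coef b (x + y) = (\<lambda>i. sb_coef b x i + sb_coef b y i)"
proof (rule coef_unique[OF assms])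
  show "(\<lambda>n. \<Sum>i<n. (sb_coef b x i + sb_coef b y i) *\<^sub>R b i) \<longlonglongrightarrow> x + y"
    using tendsto_add[OF coef_conv[OF assms, of x] coef_conv[OF assms, of y]]
    by (simp add: scaleR_add_left sum.distrib)
qed

lemma coef_scale: assumes "schauder_basis b"
  shows "sb_coef b (r *\<^sub>R x) = (\<lambda>i. r * sb_coef b x i)"
proof (rule coef_unique[OF assms])
  show "(\<lambda>n. \<Sum>i<n. (r * sb_coef b x i) *\<^sub>R b i) \<longlonglongrightarrow> r *\<^sub>R x"
    using tendsto_scaleR[OF tendsto_const[of r] coef_conv[OF assms, of x]]
    by (simp add: scaleR_sum_right)
qed

lemma coef_minus: assumes "schauder_basis b"
  shows "sb_coef b (- x) = (\<lambda>i. - sb_coef b x i)"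
  using coef_scale[OF assms, of "-1" x] by simp

lemma coef_diff: assumes "schauder_basis b"
  shows "sb_coef b (x - y) = (\<lambda>i. sb_coef b x i - sb_coef b y i)"
  using coef_add[OF assms, of x "-y"] coef_minus[OF assms, of y] by simp

lemma fin_supp_conv:
  fixes b :: "nat \<Rightarrow> 'a::real_normed_vector"
  assumes "\<And>k. k \<ge> M \<Longrightarrow> c k = 0"
  shows "(\<lambda>n. \<Sum>i<n. c i *\<^sub>R b i) \<longlonglongrightarrow> (\<Sum>i<M. c i *\<^sub>R b i)"
proof (rule tendsto_eventually, rule eventually_sequentiallyI[of M])
  fix n assume "M \<le> n"
  have "(\<Sum>i<n. c i *\<^sub>R b i) = (\<Sum>i<M. c i *\<^sub>R b i)"
    by (rule sum.mono_neutral_right) (use \<open>M \<le> n\<close> assms in auto)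
  then show "(\<Sum>i<n. c i *\<^sub>R b i) = (\<Sum>i<M. c i *\<^sub>R b i)" .
qed

lemma delta_sum: fixes b :: "nat \<Rightarrow> 'a::real_vector" shows "(\<Sum>k<n. (if k = i then 1 else 0::real) *\<^sub>R b k) = (if i < n then b i else 0)"
proof -
  have "(\<Sum>k<n. (if k = i then 1 else 0::real) *\<^sub>R b k) = (\<Sum>k<n. if k = i then b k else 0)"
    by (rule sum.cong) auto
  also have "\<dots> = (if i < n then b i else 0)" by (subst sum.delta) auto
  finally show ?thesis .
qed

lemma delta_conv:
  fixes b :: "nat \<Rightarrow> 'a::real_normed_vector"
  shows "(\<lambda>n. \<Sum>k<n. (if k = i then 1 else 0::real) *\<^sub>R b k) \<longlonglongrightarrow> b i"
proof -
  have "(\<lambda>n. \<Sum>k<n. (if k = i then 1 else 0::real) *\<^sub>R b k) \<longlonglongrightarrow> (\<Sum>k<Suc i. (if k = i then 1 else 0::real) *\<^sub>R b k)"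
    by (rule fin_supp_conv) auto
  then show ?thesis unfolding delta_sum by simp
qed

lemma coef_b: assumes "schauder_basis b" shows "sb_coef b (b i) = (\<lambda>k. if k = i then 1 else 0)"
  by (rule coef_unique[OF assms delta_conv])

lemma b_nonzero: assumes "schauder_basis b" shows "b j \<noteq> 0"
proof
  assume h: "b j = 0"
  have "sb_coef b 0 = (\<lambda>i. 0)"
    by (rule coef_unique[OF assms]) simp
  hence "sb_coef b (b j) j = 0" using h by simp
  thus False using coef_b[OF assms, of j] by simp
qed

lemma b_inj: assumes "schauder_basis b" shows "inj b"
proof (rule injI, rule ccontr)
  fix i j assume e: "b i = b j" "i \<noteq> j"
  have "sb_coef b (b i) i = 1" using coef_b[OF assms, of i] by simp
  moreover have "sb_coef b (b j) i = 0" using coef_b[OF assms, of j] e(2) by simp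
  moreover have "sb_coef b (b i) i = sb_coef b (b j) i"
    using arg_cong[where f="\<lambda>z. sb_coef b z i", OF e(1)] .
  ultimately show False by simp
qed


definition sb_P :: "(nat \<Rightarrow> 'a::real_normed_vector) \<Rightarrow> nat \<Rightarrow> 'a \<Rightarrow> 'a" where
  "sb_P b n x = (\<Sum>i<n. sb_coef b x i *\<^sub>R b i)"

definition sb_N :: "(nat \<Rightarrow> 'a::real_normed_vector) \<Rightarrow> 'a \<Rightarrow> real" where
  "sb_N b x = (SUP n. norm (sb_P b n x))"

context
  fixes b :: "nat \<Rightarrow> 'a::real_normed_vector"
  assumes sb: "schauder_basis b"
begin

lemma P_conv: "(\<lambda>n. sb_P b n x) \<longlonglongrightarrow> x"
  unfolding sb_P_def by (rule coef_conv[OF sb])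

lemma P_add: "sb_P b n (x + y) = sb_P b n x + sb_P b n y"
  unfolding sb_P_def coef_add[OF sb] by (simp add: scaleR_add_left sum.distrib)

lemma P_diff: "sb_P b n (x - y) = sb_P b n x - sb_P b n y"
  unfolding sb_P_def coef_diff[OF sb] by (simp add: scaleR_diff_left sum_subtractf)

lemma P_scale: "sb_P b n (r *\<^sub>R x) = r *\<^sub>R sb_P b n x"
  unfolding sb_P_def coef_scale[OF sb] by (simp add: scaleR_sum_right)

lemma P_zero: "sb_P b n 0 = 0"
  using P_scale[of n 0 0] by simp

lemma N_bdd: "bdd_above (range (\<lambda>n. norm (sb_P b n x)))"
proof -
  have "Bseq (\<lambda>n. sb_P b n x)" using P_conv by (intro convergent_imp_Bseq convergentI)
  then obtain K where "\<And>n. norm (sb_P b n x) \<le> K" unfolding Bseq_def by blast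
  then show ?thesis by (intro bdd_aboveI) auto
qed

lemma N_ge: "norm (sb_P b n x) \<le> sb_N b x"
  unfolding sb_N_def by (rule cSUP_upper[OF _ N_bdd]) simp

lemma N_least: "(\<And>n. norm (sb_P b n x) \<le> e) \<Longrightarrow> sb_N b x \<le> e"
  unfolding sb_N_def by (rule cSUP_least) auto

lemma N_nonneg: "0 \<le> sb_N b x"
  using N_ge[of 0 x] by (simp add: sb_P_def)

lemma norm_le_N: "norm x \<le> sb_N b x"
  by (rule Lim_norm_ubound[OF _ P_conv]) (auto intro!: always_eventually N_ge)

lemma N_triangle: "sb_N b (x + y) \<le> sb_N b x + sb_N b y"
proof (rule N_least)
  fix n
  have "norm (sb_P b n (x + y)) \<le> norm (sb_P b n x) + norm (sb_P b n y)"
    unfolding P_add by (rule norm_triangle_ineq)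
  also have "\<dots> \<le> sb_N b x + sb_N b y" by (intro add_mono N_ge)
  finally show "norm (sb_P b n (x + y)) \<le> sb_N b x + sb_N b y" .
qed

lemma N_scale_le: "sb_N b (r *\<^sub>R x) \<le> \<bar>r\<bar> * sb_N b x"
proof (rule N_least)
  fix n
  show "norm (sb_P b n (r *\<^sub>R x)) \<le> \<bar>r\<bar> * sb_N b x"
    unfolding P_scale by (simp add: mult_left_mono N_ge)
qed

lemma N_scale: "sb_N b (r *\<^sub>R x) = \<bar>r\<bar> * sb_N b x"
proof (cases "r = 0")
  case True
  have "sb_N b 0 \<le> 0" by (rule N_least) (simp add: P_zero)
  with True show ?thesis using N_nonneg[of 0] by simp
next
  case False
  have "sb_N b x = sb_N b (inverse r *\<^sub>R (r *\<^sub>R x))" using False by simp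
  also have "\<dots> \<le> \<bar>inverse r\<bar> * sb_N b (r *\<^sub>R x)" by (rule N_scale_le)
  finally have "\<bar>r\<bar> * sb_N b x \<le> sb_N b (r *\<^sub>R x)"
    using False by (simp add: field_simps abs_inverse)
  with N_scale_le[of r x] show ?thesis by linarith
qed

lemma N_zero: "sb_N b 0 = 0"
  using N_scale[of 0 0] by simp

lemma N_minus: "sb_N b (- x) = sb_N b x"
  using N_scale[of "-1" x] by simp

lemma N_commute: "sb_N b (x - y) = sb_N b (y - x)"
  using N_minus[of "y - x"] by simp

lemma N_triangle_diff: "sb_N b (x - z) \<le> sb_N b (x - y) + sb_N b (y - z)"
  using N_triangle[of "x - y" "y - z"] by simp

lemma coef_bound: "\<bar>sb_coef b x i\<bar> * norm (b i) \<le> 2 * sb_N b x"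
proof -
  have "sb_coef b x i *\<^sub>R b i = sb_P b (Suc i) x - sb_P b i x"
    unfolding sb_P_def by simp
  hence "\<bar>sb_coef b x i\<bar> * norm (b i) = norm (sb_P b (Suc i) x - sb_P b i x)"
    by (metis norm_scaleR)
  also have "\<dots> \<le> norm (sb_P b (Suc i) x) + norm (sb_P b i x)" by (rule norm_triangle_ineq4)
  also have "\<dots> \<le> 2 * sb_N b x" using N_ge[of "Suc i" x] N_ge[of i x] by simp
  finally show ?thesis .
qed

end


context
  fixes b :: "nat \<Rightarrow> 'a::banach"
  assumes sb: "schauder_basis b"
begin

lemma N_complete:
  fixes x :: "nat \<Rightarrow> 'a"
  assumes C: "\<And>e. e > 0 \<Longrightarrow> \<exists>K. \<forall>k\<ge>K. \<forall>l\<ge>K. sb_N b (x k - x l) < e"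
  shows "\<exists>y. \<forall>e>0. \<exists>K. \<forall>k\<ge>K. sb_N b (x k - y) \<le> e"
proof -
  have "convergent (\<lambda>k. sb_coef b (x k) i)" for i
  proof -
    have nb: "norm (b i) > 0" using b_nonzero[OF sb] by simp
    have "Cauchy (\<lambda>k. sb_coef b (x k) i)"
    proof (rule CauchyI)
      fix e :: real assume "e > 0"
      then obtain K where K: "\<forall>k\<ge>K. \<forall>l\<ge>K. sb_N b (x k - x l) < e * norm (b i) / 2"
        using C[of "e * norm (b i) / 2"] nb by auto
      show "\<exists>M. \<forall>m\<ge>M. \<forall>n\<ge>M. norm (sb_coef b (x m) i - sb_coef b (x n) i) < e"
      proof (intro exI allI impI)
        fix m n assume "K \<le> m" "K \<le> n"
        have "\<bar>sb_coef b (x m - x n) i\<bar> * norm (b i) \<le> 2 * sb_N b (x m - x n)"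
          by (rule coef_bound[OF sb])
        also have "\<dots> < e * norm (b i)" using K \<open>K \<le> m\<close> \<open>K \<le> n\<close> by force
        finally have "\<bar>sb_coef b (x m - x n) i\<bar> < e" using nb by simp
        then show "norm (sb_coef b (x m) i - sb_coef b (x n) i) < e"
          by (simp add: coef_diff[OF sb])
      qed
    qed
    then show ?thesis by (simp add: Cauchy_convergent_iff)
  qed
  then obtain c where c: "\<And>i. (\<lambda>k. sb_coef b (x k) i) \<longlonglongrightarrow> c i"
    unfolding convergent_def by metis
  define S where "S n = (\<Sum>i<n. c i *\<^sub>R b i)" for n
  have PS: "(\<lambda>k. sb_P b n (x k)) \<longlonglongrightarrow> S n" for n
    unfolding sb_P_def S_def by (intro tendsto_sum tendsto_scaleR c tendsto_const)
  have unif: "\<exists>K. \<forall>k\<ge>K. \<forall>n. norm (sb_P b n (x k) - S n) \<le> e" if "e > 0" for e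
  proof -
    obtain K where K: "\<forall>k\<ge>K. \<forall>l\<ge>K. sb_N b (x k - x l) < e" using C[OF \<open>e > 0\<close>] by auto
    have "norm (sb_P b n (x k) - S n) \<le> e" if "k \<ge> K" for k n
    proof (rule Lim_norm_ubound)
      show "((\<lambda>l. sb_P b n (x k) - sb_P b n (x l)) \<longlongrightarrow> sb_P b n (x k) - S n) sequentially"
        by (intro tendsto_diff tendsto_const PS)
      show "\<forall>\<^sub>F l in sequentially. norm (sb_P b n (x k) - sb_P b n (x l)) \<le> e"
      proof (rule eventually_sequentiallyI[of K])
        fix l assume "K \<le> l"
        have "norm (sb_P b n (x k) - sb_P b n (x l)) = norm (sb_P b n (x k - x l))"
          by (simp add: P_diff[OF sb])
        also have "\<dots> \<le> sb_N b (x k - x l)" by (rule N_ge[OF sb])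
        also have "\<dots> < e" using K \<open>K \<le> l\<close> \<open>k \<ge> K\<close> by blast
        finally show "norm (sb_P b n (x k) - sb_P b n (x l)) \<le> e" by simp
      qed
    qed simp
    then show ?thesis by blast
  qed
  have "Cauchy S"
  proof (rule CauchyI)
    fix e :: real assume "e > 0"
    then obtain K where K: "\<forall>k\<ge>K. \<forall>n. norm (sb_P b n (x k) - S n) \<le> e / 4"
      using unif[of "e/4"] by auto
    have "Cauchy (\<lambda>n. sb_P b n (x K))" using P_conv[OF sb] by (rule LIMSEQ_imp_Cauchy)
    then obtain M where M: "\<forall>m\<ge>M. \<forall>n\<ge>M. norm (sb_P b m (x K) - sb_P b n (x K)) < e / 4"
      using CauchyD[OF \<open>Cauchy (\<lambda>n. sb_P b n (x K))\<close>, of "e/4"] \<open>e > 0\<close> by auto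
    show "\<exists>M. \<forall>m\<ge>M. \<forall>n\<ge>M. norm (S m - S n) < e"
    proof (intro exI allI impI)
      fix m n assume "M \<le> m" "M \<le> n"
      have "norm (S m - S n) = norm ((S m - sb_P b m (x K)) + (sb_P b m (x K) - sb_P b n (x K)) + (sb_P b n (x K) - S n))"
        by simp
      moreover have "norm ((S m - sb_P b m (x K)) + (sb_P b m (x K) - sb_P b n (x K)) + (sb_P b n (x K) - S n))
         \<le> norm ((S m - sb_P b m (x K)) + (sb_P b m (x K) - sb_P b n (x K))) + norm (sb_P b n (x K) - S n)"
        by (rule norm_triangle_ineq)
      moreover have "norm ((S m - sb_P b m (x K)) + (sb_P b m (x K) - sb_P b n (x K)))
         \<le> norm (S m - sb_P b m (x K)) + norm (sb_P b m (x K) - sb_P b n (x K))"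
        by (rule norm_triangle_ineq)
      moreover have "norm (S m - sb_P b m (x K)) = norm (sb_P b m (x K) - S m)"
        by (rule norm_minus_commute)
      moreover have "norm (sb_P b m (x K) - S m) \<le> e/4" using K by blast
      moreover have "norm (sb_P b n (x K) - S n) \<le> e/4" using K by blast
      moreover have "norm (sb_P b m (x K) - sb_P b n (x K)) < e/4"
        using M \<open>M \<le> m\<close> \<open>M \<le> n\<close> by blast
      ultimately show "norm (S m - S n) < e" using \<open>e > 0\<close> by linarith
    qed
  qed
  then obtain y where y: "S \<longlonglongrightarrow> y" by (auto simp: Cauchy_convergent_iff convergent_def)
  have cy: "sb_coef b y = c" using y unfolding S_def by (rule coef_unique[OF sb])
  have Py: "sb_P b n y = S n" for n unfolding sb_P_def S_def cy ..
  show ?thesis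
  proof (rule exI[of _ y], intro allI impI)
    fix e :: real assume "e > 0"
    then obtain K where K: "\<forall>k\<ge>K. \<forall>n. norm (sb_P b n (x k) - S n) \<le> e" using unif by blast
    show "\<exists>K. \<forall>k\<ge>K. sb_N b (x k - y) \<le> e"
    proof (intro exI allI impI)
      fix k assume "K \<le> k"
      show "sb_N b (x k - y) \<le> e"
        by (rule N_least[OF sb]) (use K \<open>K \<le> k\<close> in \<open>simp add: P_diff[OF sb] Py\<close>)
    qed
  qed
qed

end


context
  fixes b :: "nat \<Rightarrow> 'a::banach"
  assumes sb: "schauder_basis b"
begin

lemma N_tele:
  fixes t :: "nat \<Rightarrow> 'a"
  assumes T: "\<And>n. sb_N b (t (Suc n) - t n) \<le> C * (1/2)^n" and "m \<le> n"
  shows "sb_N b (t n - t m) \<le> 2 * C * (1/2)^m - 2 * C * (1/2)^n"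
  using \<open>m \<le> n\<close>
proof (induction n rule: dec_induct)
  case base
  then show ?case by (simp add: N_zero[OF sb])
next
  case (step n)
  have "sb_N b (t (Suc n) - t m) \<le> sb_N b (t (Suc n) - t n) + sb_N b (t n - t m)"
    by (rule N_triangle_diff[OF sb])
  also have "\<dots> \<le> C * (1/2)^n + (2 * C * (1/2)^m - 2 * C * (1/2)^n)"
    using T[of n] step.IH by linarith
  also have "\<dots> = 2 * C * (1/2)^m - 2 * C * (1/2)^(Suc n)" by simp
  finally show ?case .
qed

lemma N_geom_conv:
  fixes t :: "nat \<Rightarrow> 'a"
  assumes T: "\<And>n. sb_N b (t (Suc n) - t n) \<le> C * (1/2)^n"
  shows "\<exists>w. \<forall>e>0. \<exists>K. \<forall>k\<ge>K. sb_N b (t k - w) \<le> e"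
proof (rule N_complete[OF sb])
  have C0: "C \<ge> 0" using T[of 0] N_nonneg[OF sb, of "t (Suc 0) - t 0"] by simp
  fix e :: real assume "e > 0"
  obtain M where M: "(1/2::real)^M < e / (2 * C + 1)"
    using real_arch_pow_inv[of "e / (2 * C + 1)" "1/2"] \<open>e > 0\<close> C0 by auto
  have bnd: "sb_N b (t k - t l) < e" if "M \<le> l" "l \<le> k" for k l
  proof -
    have "sb_N b (t k - t l) \<le> 2 * C * (1/2)^l - 2 * C * (1/2)^k" by (rule N_tele[OF T that(2)])
    also have "\<dots> \<le> 2 * C * (1/2)^l" using C0 by simp
    also have "\<dots> \<le> 2 * C * (1/2)^M" using C0 that(1) by (intro mult_left_mono power_decreasing) auto
    also have "\<dots> \<le> (2 * C + 1) * (1/2)^M" by (intro mult_right_mono) auto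
    also have "\<dots> < e" using M C0 by (simp add: field_simps)
    finally show ?thesis .
  qed
  show "\<exists>K. \<forall>k\<ge>K. \<forall>l\<ge>K. sb_N b (t k - t l) < e"
  proof (intro exI allI impI)
    fix k l assume "M \<le> k" "M \<le> l"
    show "sb_N b (t k - t l) < e"
    proof (cases "l \<le> k")
      case True then show ?thesis using bnd \<open>M \<le> l\<close> by blast
    next
      case False then show ?thesis using bnd[of k l] \<open>M \<le> k\<close> N_commute[OF sb, of "t k" "t l"] by simp
    qed
  qed
qed

lemma baire_step: "\<exists>m x0 r. r > 0 \<and> ball x0 r \<subseteq> closure {x. sb_N b x \<le> real m}"
proof (rule ccontr)
  assume H: "\<not> ?thesis"
  define E where "E m = closure {x. sb_N b x \<le> real m}" for m
  have "euclidean interior_of \<Union>(range E) = {}"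
  proof (rule Baire_category_alt)
    show "completely_metrizable_space (euclidean::'a topology) \<or> locally_compact_space (euclidean::'a topology) \<and> regular_space (euclidean::'a topology)"
      using completely_metrizable_space_euclidean by blast
    show "countable (range E)" by simp
    fix T assume "T \<in> range E"
    then obtain m where m: "T = E m" by blast
    have "interior T = {}"
    proof (rule ccontr)
      assume "interior T \<noteq> {}"
      then obtain x0 where "x0 \<in> interior T" by blast
      have "\<exists>r>0. ball x0 r \<subseteq> interior T"
        using open_interior[of T] \<open>x0 \<in> interior T\<close> unfolding open_contains_ball by blast
      then obtain r where "r > 0" "ball x0 r \<subseteq> T" using interior_subset[of T] by blast
      hence "r > 0 \<and> ball x0 r \<subseteq> closure {x. sb_N b x \<le> real m}" using m by (simp add: E_def)
      with H show False by blast
    qed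
    then show "closedin euclidean T \<and> euclidean interior_of T = {}"
      using m by (simp add: E_def)
  qed
  moreover have "\<Union>(range E) = UNIV"
  proof -
    have "x \<in> E (nat \<lceil>sb_N b x\<rceil>)" for x
    proof -
      have "sb_N b x \<le> real (nat \<lceil>sb_N b x\<rceil>)" by (rule real_nat_ceiling_ge)
      then show ?thesis unfolding E_def by (intro subsetD[OF closure_subset]) simp
    qed
    then show ?thesis by blast
  qed
  ultimately show False by simp
qed

lemma N_bounded: "\<exists>K\<ge>0. \<forall>y. sb_N b y \<le> K * norm y"
proof -
  obtain m x0 r where r: "r > 0" and B: "ball x0 r \<subseteq> closure {x. sb_N b x \<le> real m}"
    using baire_step by blast
  have approx: "\<exists>z. sb_N b z \<le> 2 * real m \<and> norm (y - z) < e" if ny: "norm y < r" and e0: "e > 0" for y e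
  proof -
    have "x0 + y \<in> closure {x. sb_N b x \<le> real m}" using B ny by (auto simp: dist_norm)
    then obtain u where u: "sb_N b u \<le> real m" "dist u (x0 + y) < e/2"
      using closure_approachable[THEN iffD1, rule_format, of "x0 + y" _ "e/2"] e0 by auto
    have "x0 \<in> closure {x. sb_N b x \<le> real m}" using B r by auto
    then obtain v where v: "sb_N b v \<le> real m" "dist v x0 < e/2"
      using closure_approachable[THEN iffD1, rule_format, of x0 _ "e/2"] e0 by auto
    have "sb_N b (u - v) \<le> sb_N b u + sb_N b (- v)" using N_triangle[OF sb, of u "- v"] by simp
    also have "\<dots> \<le> 2 * real m" using u v N_minus[OF sb, of v] by simp
    finally have 1: "sb_N b (u - v) \<le> 2 * real m" .
    have "y - (u - v) = (x0 + y - u) - (x0 - v)" by (simp add: algebra_simps)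
    hence "norm (y - (u - v)) \<le> norm (x0 + y - u) + norm (x0 - v)"
      by (metis norm_triangle_ineq4)
    also have "\<dots> < e" using u(2) v(2) by (simp add: dist_norm norm_minus_commute)
    finally show ?thesis using 1 by blast
  qed
  define K where "K = 4 * real m / r"
  have K0: "K \<ge> 0" using r by (simp add: K_def)
  have approx2: "\<exists>z. sb_N b z \<le> K * norm y \<and> norm (y - z) < e" if e0: "e > 0" for y e
  proof (cases "y = 0")
    case True then show ?thesis using e0 by (intro exI[of _ 0]) (simp add: N_zero[OF sb])
  next
    case False
    define t where "t = r / (2 * norm y)"
    have t0: "t > 0" using False r by (simp add: t_def)
    have "norm (t *\<^sub>R y) < r" using False r t0 by (simp add: t_def)
    then obtain z' where z': "sb_N b z' \<le> 2 * real m" "norm (t *\<^sub>R y - z') < t * e"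
      using approx[of "t *\<^sub>R y" "t * e"] t0 e0 by auto
    define z where "z = inverse t *\<^sub>R z'"
    have "sb_N b z = inverse t * sb_N b z'" using t0 by (simp add: z_def N_scale[OF sb])
    also have "\<dots> \<le> inverse t * (2 * real m)" using z' t0 by (intro mult_left_mono) auto
    also have "\<dots> = K * norm y" using False r by (simp add: t_def K_def field_simps)
    finally have 1: "sb_N b z \<le> K * norm y" .
    have "t *\<^sub>R y - z' = t *\<^sub>R (y - z)" using t0 by (simp add: z_def algebra_simps)
    hence "norm (t *\<^sub>R y - z') = t * norm (y - z)" using t0 by simp
    hence "norm (y - z) < e" using z'(2) t0 by simp
    with 1 show ?thesis by blast
  qed
  define Z where "Z y e = (SOME z. sb_N b z \<le> K * norm y \<and> norm (y - z) < e)" for y e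
  have Z: "\<And>y e. e > 0 \<Longrightarrow> sb_N b (Z y e) \<le> K * norm y \<and> norm (y - Z y e) < e"
    unfolding Z_def by (rule someI_ex) (rule approx2)
  have main: "sb_N b y \<le> K * norm y + 2 * K * \<epsilon>" if "\<epsilon> > 0" for y \<epsilon>
  proof -
    define R where "R = rec_nat y (\<lambda>k r. r - Z r (\<epsilon> / 2^k))"
    have R0: "R 0 = y" and RS: "R (Suc k) = R k - Z (R k) (\<epsilon> / 2^k)" for k
      by (simp_all add: R_def)
    define z where "z k = Z (R k) (\<epsilon> / 2^k)" for k
    have Rn: "norm (R (Suc k)) < \<epsilon> / 2^k" for k
      using Z[of "\<epsilon> / 2^k" "R k"] that by (simp add: RS z_def)
    have Nz: "sb_N b (z k) \<le> K * norm (R k)" for k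
      using Z[of "\<epsilon> / 2^k" "R k"] that by (simp add: z_def)
    define s where "s n = (\<Sum>k<n. z k)" for n
    have sR: "s n = y - R n" for n
      by (induction n) (simp_all add: s_def R0 RS z_def)
    define t where "t n = s (Suc n)" for n
    have T: "sb_N b (t (Suc n) - t n) \<le> (K * \<epsilon>) * (1/2)^n" for n
    proof -
      have "t (Suc n) - t n = z (Suc n)" by (simp add: t_def s_def)
      hence "sb_N b (t (Suc n) - t n) \<le> K * norm (R (Suc n))" using Nz by simp
      also have "\<dots> \<le> K * (\<epsilon> / 2^n)" using mult_left_mono[OF less_imp_le[OF Rn[of n]] K0] .
      also have "\<dots> = (K * \<epsilon>) * (1/2)^n" by (simp add: power_divide)
      finally show ?thesis .
    qed
    obtain w where w: "\<forall>e>0. \<exists>K. \<forall>k\<ge>K. sb_N b (t k - w) \<le> e"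
      using N_geom_conv[OF T] by blast
    have Nt: "sb_N b (t n) \<le> K * norm y + 2 * K * \<epsilon>" for n
    proof -
      have t0: "t 0 = z 0" by (simp add: t_def s_def)
      have "sb_N b (t n) \<le> sb_N b (t n - t 0) + sb_N b (t 0)"
        using N_triangle[OF sb, of "t n - t 0" "t 0"] by simp
      also have "\<dots> \<le> (2 * (K * \<epsilon>) * (1/2)^0 - 2 * (K * \<epsilon>) * (1/2)^n) + K * norm y"
        using N_tele[OF T, of 0 n] Nz[of 0] by (simp add: t0 R0)
      also have "\<dots> \<le> K * norm y + 2 * K * \<epsilon>" using K0 that by simp
      finally show ?thesis .
    qed
    have yw: "y = w"
    proof -
      have "norm (y - w) \<le> 2 * \<delta>" if "\<delta> > 0" for \<delta>
      proof -
        obtain K1 where K1: "\<forall>k\<ge>K1. sb_N b (t k - w) \<le> \<delta>" using w \<open>\<delta> > 0\<close> by blast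
        obtain M where M: "(1/2::real)^M < \<delta> / \<epsilon>"
          using real_arch_pow_inv[of "\<delta> / \<epsilon>" "1/2"] \<open>\<delta> > 0\<close> \<open>\<epsilon> > 0\<close> by auto
        define k where "k = max K1 M"
        have "norm (R (Suc k)) < \<epsilon> / 2^k" by (rule Rn)
        also have "\<epsilon> / 2^k = \<epsilon> * (1/2)^k" by (simp add: power_divide)
        also have "\<dots> \<le> \<epsilon> * (1/2)^M" using \<open>\<epsilon> > 0\<close> by (intro mult_left_mono power_decreasing) (auto simp: k_def)
        also have "\<dots> < \<delta>" using M \<open>\<epsilon> > 0\<close> by (simp add: field_simps)
        finally have 1: "norm (y - t k) < \<delta>" by (simp add: t_def sR)
        have 2: "norm (t k - w) \<le> \<delta>"
          using norm_le_N[OF sb, of "t k - w"] K1[rule_format, of k] by (simp add: k_def)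
        have "norm (y - w) \<le> norm (y - t k) + norm (t k - w)" by (rule norm_diff_triangle_ineq[of y "t k" "t k" w, simplified])
        with 1 2 show ?thesis by linarith
      qed
      note half = this
      have "norm (y - w) \<le> 0 + e" if "e > 0" for e
        using half[of "e/2"] that by simp
      hence "norm (y - w) \<le> 0" by (rule field_le_epsilon)
      then show ?thesis by simp
    qed
    show ?thesis
    proof (rule field_le_epsilon)
      fix \<delta> :: real assume "\<delta> > 0"
      then obtain K1 where K1: "\<forall>k\<ge>K1. sb_N b (t k - w) \<le> \<delta>" using w by blast
      have "sb_N b w \<le> sb_N b (w - t K1) + sb_N b (t K1)"
        using N_triangle[OF sb, of "w - t K1" "t K1"] by simp
      also have "\<dots> \<le> \<delta> + (K * norm y + 2 * K * \<epsilon>)"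
        using K1 Nt[of K1] N_commute[OF sb, of w "t K1"] by force
      finally show "sb_N b y \<le> K * norm y + 2 * K * \<epsilon> + \<delta>" using yw by simp
    qed
  qed
  have "sb_N b y \<le> K * norm y" for y
  proof (rule field_le_epsilon)
    fix e :: real assume "e > 0"
    have "sb_N b y \<le> K * norm y + 2 * K * (e / (2 * K + 1))"
      using main[of "e / (2 * K + 1)" y] \<open>e > 0\<close> K0 by simp
    also have "2 * K * (e / (2 * K + 1)) \<le> e" using K0 \<open>e > 0\<close> by (simp add: field_simps)
    finally show "sb_N b y \<le> K * norm y + e" by simp
  qed
  with K0 show ?thesis by blast
qed

end


lemma zero_in_gen: "(0::'a::ab_group_add) \<in> gen_subgroup S"
  unfolding gen_subgroup_def by (rule CollectI, rule exI[of _ "{}"]) auto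

lemma mult_in_gen: "of_int k *\<^sub>R (a::'a::real_vector) \<in> gen_subgroup {a}"
  unfolding gen_subgroup_def
  by (rule CollectI, rule exI[of _ "{a}"], rule exI[of _ "\<lambda>_. k"]) (simp add: int_mult_eq)

lemma top_indep:
  fixes b :: "nat \<Rightarrow> 'a::banach"
  assumes sb: "schauder_basis b"
  shows "top_independent (range b)"
proof -
  obtain K where K0: "K \<ge> 0" and KN: "\<And>y. sb_N b y \<le> K * norm y"
    using N_bounded[OF sb] by blast
  have inj: "inj b" by (rule b_inj[OF sb])
  have "0 \<notin> range b" using b_nonzero[OF sb] by (metis imageE)
  moreover have "\<exists>U. nhd0 U \<and>
        (\<forall>F z. finite F \<and> F \<subseteq> range b \<and> (\<Sum>a\<in>F. int_mult (z a) a) \<in> U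
               \<longrightarrow> (\<forall>a\<in>F. int_mult (z a) a \<in> W))" if "nhd0 W" for W
  proof -
    obtain V where V: "open V" "0 \<in> V" "V \<subseteq> W" using \<open>nhd0 W\<close> unfolding nhd0_def by blast
    have "\<exists>\<epsilon>>0. ball 0 \<epsilon> \<subseteq> V" using V(1,2) unfolding open_contains_ball by blast
    then obtain \<epsilon> where e0: "\<epsilon> > 0" and eV: "ball 0 \<epsilon> \<subseteq> V" by blast
    define U where "U = ball (0::'a) (\<epsilon> / (2 * K + 1))"
    have "nhd0 U" unfolding nhd0_def U_def
      by (rule exI[of _ "ball 0 (\<epsilon> / (2 * K + 1))"]) (use e0 K0 in auto)
    moreover have "\<forall>a\<in>F. int_mult (z a) a \<in> W"
      if F: "finite F" "F \<subseteq> range b" and xU: "(\<Sum>a\<in>F. int_mult (z a) a) \<in> U" for F z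
    proof
      fix a assume "a \<in> F"
      define x where "x = (\<Sum>a\<in>F. int_mult (z a) a)"
      obtain j where j: "a = b j" using \<open>a \<in> F\<close> F(2) by blast
      define c where "c i = (if b i \<in> F then real_of_int (z (b i)) else 0)" for i
      have "finite (b -` F)" using finite_vimageI[OF F(1) inj] .
      then obtain M where M: "b -` F \<subseteq> {..<M}" using finite_nat_bounded by blast
      have cz: "c k = 0" if "k \<ge> M" for k
      proof -
        have "b k \<notin> F" using M that by auto
        then show ?thesis by (simp add: c_def)
      qed
      have "(\<Sum>i<M. c i *\<^sub>R b i) = (\<Sum>i<M. if b i \<in> F then real_of_int (z (b i)) *\<^sub>R b i else 0)"
        by (rule sum.cong) (auto simp: c_def)
      also have "\<dots> = (\<Sum>i\<in>{i\<in>{..<M}. b i \<in> F}. real_of_int (z (b i)) *\<^sub>R b i)"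
        by (rule sum.inter_filter[symmetric]) simp
      also have "\<dots> = (\<Sum>a\<in>b ` {i\<in>{..<M}. b i \<in> F}. real_of_int (z a) *\<^sub>R a)"
        by (subst sum.reindex) (use inj in \<open>auto simp: inj_on_def\<close>)
      also have "b ` {i\<in>{..<M}. b i \<in> F} = F"
      proof
        show "b ` {i \<in> {..<M}. b i \<in> F} \<subseteq> F" by auto
        show "F \<subseteq> b ` {i \<in> {..<M}. b i \<in> F}"
        proof
          fix a' assume "a' \<in> F"
          then obtain i where "a' = b i" using F(2) by blast
          with \<open>a' \<in> F\<close> M show "a' \<in> b ` {i \<in> {..<M}. b i \<in> F}" by auto
        qed
      qed
      finally have "(\<Sum>i<M. c i *\<^sub>R b i) = x" by (simp add: x_def int_mult_eq)
      hence "(\<lambda>n. \<Sum>i<n. c i *\<^sub>R b i) \<longlonglongrightarrow> x" using fin_supp_conv[of M c b] cz by simp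
      hence cx: "sb_coef b x = c" by (rule coef_unique[OF sb])
      have cj: "c j = real_of_int (z a)" using \<open>a \<in> F\<close> j by (simp add: c_def)
      have nx: "norm x < \<epsilon> / (2 * K + 1)" using xU by (simp add: x_def U_def)
      have "\<bar>real_of_int (z a)\<bar> * norm (b j) \<le> 2 * sb_N b x"
        using coef_bound[OF sb, of x j] cx cj by simp
      also have "\<dots> \<le> 2 * (K * norm x)" using KN[of x] by simp
      also have "\<dots> = (2 * K) * norm x" by simp
      also have "\<dots> \<le> (2 * K) * (\<epsilon> / (2 * K + 1))" using nx K0 by (intro mult_left_mono) auto
      also have "\<dots> < \<epsilon>" using e0 K0 by (simp add: field_simps)
      finally have "norm (int_mult (z a) a) < \<epsilon>" by (simp add: int_mult_eq j)
      hence "int_mult (z a) a \<in> ball 0 \<epsilon>" by simp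
      with eV V(3) show "int_mult (z a) a \<in> W" by blast
    qed
    ultimately show ?thesis by blast
  qed
  ultimately show ?thesis unfolding top_independent_def by blast
qed


lemma not_tychonoff:
  fixes b :: "nat \<Rightarrow> 'a::banach"
  assumes sb: "schauder_basis b"
  shows "\<not> is_tychonoff_direct_sum (range b)"
proof
  define A where "A = range b"
  assume "is_tychonoff_direct_sum (range b)"
  hence cont: "continuous_map (dsum_topology A) (subtopology euclidean (gen_subgroup A)) (dsum_map A)"
    unfolding is_tychonoff_direct_sum_def A_def by (blast intro: homeomorphic_imp_continuous_map)
  let ?X = "\<lambda>a. subtopology euclidean (gen_subgroup {a::'a})"
  have topX: "topspace (?X a) = gen_subgroup {a}" for a by simp
  have top: "topspace (dsum_topology A) = dsum_carrier A"
    unfolding dsum_topology_def dsum_carrier_def by (auto simp: topspace_subtopology)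
  define V where "V = gen_subgroup A \<inter> ball (0::'a) 1"
  have "openin (subtopology euclidean (gen_subgroup A)) V"
    unfolding V_def by (rule openin_open_Int) simp
  hence "openin (dsum_topology A) {g \<in> topspace (dsum_topology A). dsum_map A g \<in> V}"
    by (rule openin_continuous_map_preimage[OF cont])
  then obtain T where T: "openin (product_topology ?X A) T"
    and ST: "{g \<in> dsum_carrier A. dsum_map A g \<in> V} = T \<inter> dsum_carrier A"
    unfolding top unfolding dsum_topology_def openin_subtopology by blast
  define g0 where "g0 = restrict (\<lambda>_. 0::'a) A"
  have g0c: "g0 \<in> dsum_carrier A"
    unfolding dsum_carrier_def g0_def by (auto simp: zero_in_gen)
  have "dsum_map A g0 = 0" unfolding dsum_map_def g0_def by simp
  hence "dsum_map A g0 \<in> V" by (simp add: V_def zero_in_gen)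
  with g0c ST have "g0 \<in> T" by blast
  then obtain U where U: "finite {i \<in> A. U i \<noteq> topspace (?X i)}" "\<forall>i\<in>A. openin (?X i) (U i)"
      "g0 \<in> Pi\<^sub>E A U" "Pi\<^sub>E A U \<subseteq> T"
    using T unfolding openin_product_topology_alt by blast
  define J where "J = {i \<in> A. U i \<noteq> topspace (?X i)}"
  have "infinite A" unfolding A_def using b_inj[OF sb] by (simp add: range_inj_infinite)
  then have "\<not> A \<subseteq> J" using U(1) finite_subset J_def by blast
  then obtain a where aA: "a \<in> A" and aJ: "a \<notin> J" by blast
  have Ua: "U a = gen_subgroup {a}" using aA aJ by (simp add: J_def)
  obtain n where an: "a = b n" using aA A_def by blast
  have nb: "norm a > 0" using b_nonzero[OF sb, of n] an by simp
  obtain m :: nat where m: "1 / norm a < real m" using reals_Archimedean2 by blast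
  have m1: "1 < real m * norm a" using m nb by (simp add: field_simps)
  hence m0: "m > 0" using nb by (cases m) auto
  define g where "g = restrict (\<lambda>c. if c = a then real m *\<^sub>R a else 0) A"
  have ma: "real m *\<^sub>R a \<in> gen_subgroup {a}" using mult_in_gen[of "int m" a] by simp
  have supp: "{c \<in> A. g c \<noteq> 0} = {a}" using aA m0 nb by (auto simp: g_def)
  have gc: "g \<in> dsum_carrier A"
    unfolding dsum_carrier_def by (auto simp: g_def zero_in_gen ma supp[unfolded g_def])
  have "g \<in> Pi\<^sub>E A U"
  proof -
    have "g c \<in> U c" if "c \<in> A" for c
    proof (cases "c = a")
      case True then show ?thesis using that Ua ma by (simp add: g_def)
    next
      case False
      have "g0 c \<in> U c" using U(3) that by auto
      then show ?thesis using False that by (simp add: g_def g0_def)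
    qed
    then show ?thesis by (auto simp: g_def)
  qed
  with U(4) gc ST have "dsum_map A g \<in> V" by blast
  moreover have "dsum_map A g = real m *\<^sub>R a"
    unfolding dsum_map_def supp using aA by (simp add: g_def)
  ultimately have "real m * norm a < 1" using m0 by (simp add: V_def)
  with m1 show False by simp
qed


theorem mainTheorem8:
  fixes b :: "nat \<Rightarrow> 'a::banach"
  assumes "infinite_dimensional TYPE('a)"
    and "schauder_basis b"
  shows "top_independent (range b) \<and> \<not> is_tychonoff_direct_sum (range b)"
  using top_indep[OF assms(2)] not_tychonoff[OF assms(2)] by blast

end
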